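(* Let $m,n,k$ be positive integers with $(m,k-1)=1$ and $n=\mathrm{ind}_m(k)$, let $G=G(m,n,k)=\langle a,b;\ a^m=1,\ b^n=1,\ b^{-1}ab=a^k\rangle$, let $S\subseteq\mathbb{Z}_m$ be a base and let $x\in S^*$. Then $\mathrm{orb}(x,S^* )$ is basic if and only if the $x$-family $\mathcal{F}_G(x,S)$ is complete.
   Context: $\mathrm{ind}_m(k)$ is the least positive integer $d$ with $k^d\equiv 1\pmod m$. Elements of $G$ are written uniquely as $a^ib^j$, $i\in\mathbb{Z}_m$, $j\in\mathbb{Z}_n$; $k_t=k^t-1\pmod m$. Maps are written on the right and composed left to right. For $x,y\in\mathbb{Z}_m$, $\mu(x,y):G\to G$ is $(a^ib^j)\mu(x,y)=a^{xik^j-yk_j}$, and $C(x,y)=\{\mu(x,yz):z\in\mathbb{Z}_m\}$. For $S\subseteq\mathbb{Z}_m$, $I(S)$ is the set of elements of $S$ invertible in $\mathbb{Z}_m$ and $S^*$ is the multiplicative subsemigroup of $\mathbb{Z}_m$ generated by $S$. A base is $S\subseteq \mathbb{Z}_m$ with $0\in S$ and $I(S)\ne\varnothing$. $\Sigma_G(S)$ is the semigroup under composition generated by $\{\mu(s,z):s\in S,z\in\mathbb{Z}_m\}$. For $x\in S^*$, $Y(x)=\{s^*z: s^*\in S^*, z\in\mathbb{Z}_m, \exists s\in S,\ x\equiv ss^*\pmod m\}$, $\mathcal{F}_G(x,S)=\{C(x,y):y\in Y(x)\}$, and $\mathcal{F}_G(x,S)$ is complete if $C(x,1)\in\mathcal{F}_G(x,S)$.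 The orbit of $x$ is $\mathrm{orb}(x,S^* )=\{xy: y\in I(S^* )\}$, and it is basic if $\mathrm{orb}(x,S^* )\cap S\neq\varnothing$. *)

theory Defs
  imports "HOL-Number_Theory.Number_Theory" "HOL-Library.FuncSet"
begin

text \<open>Z_m is represented by the integers {0..<m}; the element a^i b^j of
G(m,n,k) is represented by the pair (i,j) with 0 \<le> i < m, 0 \<le> j < n.
The index ind_m(k) is the library notion ord m k.\<close>

definition Zm :: "nat \<Rightarrow> int set" where
  "Zm m = {0..<int m}"

definition Gcar :: "nat \<Rightarrow> nat \<Rightarrow> (int \<times> nat) set" where
  "Gcar m n = Zm m \<times> {0..<n}"

text \<open>(a^i b^j) mu(x,y) = a^(x i k^j - y k_j), k_j = k^j - 1 (mod m).\<close>
definition mu :: "nat \<Rightarrow> nat \<Rightarrow> nat \<Rightarrow> int \<Rightarrow> int \<Rightarrow> (int \<times> nat \<Rightarrow> int \<times> nat)" where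
  "mu m n k x y = restrict
     (\<lambda>(i, j). ((x * i * int k ^ j - y * (int k ^ j - 1)) mod int m, 0)) (Gcar m n)"

definition CC :: "nat \<Rightarrow> nat \<Rightarrow> nat \<Rightarrow> int \<Rightarrow> int \<Rightarrow> (int \<times> nat \<Rightarrow> int \<times> nat) set" where
  "CC m n k x y = {mu m n k x ((y * z) mod int m) | z. z \<in> Zm m}"

definition units_part :: "nat \<Rightarrow> int set \<Rightarrow> int set" where
  "units_part m S = {s \<in> S. coprime s (int m)}"

inductive_set semigen :: "nat \<Rightarrow> int set \<Rightarrow> int set" for m S where
  gen: "s \<in> S \<Longrightarrow> s \<in> semigen m S"
| mult: "a \<in> semigen m S \<Longrightarrow> b \<in> semigen m S \<Longrightarrow> (a * b) mod int m \<in> semigen m S"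

definition is_base :: "nat \<Rightarrow> int set \<Rightarrow> bool" where
  "is_base m S \<longleftrightarrow> S \<subseteq> Zm m \<and> 0 \<in> S \<and> units_part m S \<noteq> {}"

definition Yset :: "nat \<Rightarrow> int set \<Rightarrow> int \<Rightarrow> int set" where
  "Yset m S x = {(s' * z) mod int m | s' z. s' \<in> semigen m S \<and> z \<in> Zm m \<and>
        (\<exists>s\<in>S. [x = s * s'] (mod int m))}"

definition family :: "nat \<Rightarrow> nat \<Rightarrow> nat \<Rightarrow> int set \<Rightarrow> int \<Rightarrow> (int \<times> nat \<Rightarrow> int \<times> nat) set set" where
  "family m n k S x = {CC m n k x y | y. y \<in> Yset m S x}"

definition family_complete :: "nat \<Rightarrow> nat \<Rightarrow> nat \<Rightarrow> int set \<Rightarrow> int \<Rightarrow> bool" where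
  "family_complete m n k S x \<longleftrightarrow> CC m n k x 1 \<in> family m n k S x"

definition orb :: "nat \<Rightarrow> int set \<Rightarrow> int \<Rightarrow> int set" where
  "orb m T x = {(x * y) mod int m | y. y \<in> units_part m T}"

definition orb_basic :: "nat \<Rightarrow> int set \<Rightarrow> int \<Rightarrow> bool" where
  "orb_basic m S x \<longleftrightarrow> orb m (semigen m S) x \<inter> S \<noteq> {}"

end

theory Submission
  imports Defs
begin

lemma euler_int:
  fixes a :: int
  assumes "m > 0" "coprime a (int m)"
  shows "[a ^ totient m = 1] (mod int m)"
proof (cases "m = 1")
  case True
  then show ?thesis by (simp add: cong_def)
next
  case False
  then have "residues (int m)" using assms by (simp add: residues_def)
  from residues.euler_theorem[OF this assms(2)] show ?thesis by simp
qed

lemma semigen_Zm: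
  assumes "S \<subseteq> Zm m" "m > 0" "a \<in> semigen m S"
  shows "a \<in> Zm m"
  using assms(3)
proof (induction rule: semigen.induct)
  case (gen s)
  then show ?case using assms(1) by auto
next
  case (mult a b)
  then show ?case using assms(2) by (simp add: Zm_def)
qed

lemma semigen_pow:
  assumes "S \<subseteq> Zm m" "m > 0" "a \<in> semigen m S"
  shows "a ^ Suc t mod int m \<in> semigen m S"
proof (induction t)
  case 0
  have "a \<in> Zm m" using semigen_Zm assms by blast
  then have "a mod int m = a" by (simp add: Zm_def)
  then show ?case using assms(3) by simp
next
  case (Suc t)
  have "(a ^ Suc t mod int m * a) mod int m \<in> semigen m S"
    using semigen.mult[OF Suc assms(3)] .
  moreover have "(a ^ Suc t mod int m * a) mod int m = a ^ Suc (Suc t) mod int m"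
    by (metis mod_mult_left_eq power_Suc2)
  ultimately show ?case by simp
qed

lemma inv_in_semigen:
  assumes "S \<subseteq> Zm m" "m > 0" "a \<in> semigen m S" "coprime a (int m)"
  shows "\<exists>b\<in>semigen m S. coprime b (int m) \<and> [a * b = 1] (mod int m)"
proof -
  define T where "T = totient m"
  have T: "T > 0" using assms(2) by (simp add: T_def)
  define b where "b = a ^ Suc (2 * T - 2) mod int m"
  have bS: "b \<in> semigen m S" unfolding b_def using semigen_pow assms(1-3) by blast
  have e: "[a ^ T = 1] (mod int m)" using euler_int assms T_def by blast
  have "Suc (Suc (2 * T - 2)) = T * 2" using T by simp
  then have "a * a ^ Suc (2 * T - 2) = (a ^ T) ^ 2"
    by (metis power_Suc power_mult)
  then have "[a * a ^ Suc (2 * T - 2) = 1] (mod int m)"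
    using cong_pow[OF e, of 2] by simp
  then have ab: "[a * b = 1] (mod int m)" unfolding b_def
    by (metis cong_def mod_mult_right_eq)
  have "coprime b (int m)"
    by (metis ab cong_imp_coprime cong_sym coprime_1_left coprime_mult_left_iff)
  with bS ab show ?thesis by blast
qed

lemma mu_cong:
  assumes "[y1 = y2] (mod int m)"
  shows "mu m n k x y1 = mu m n k x y2"
proof -
  have "\<And>i j. [x * i * int k ^ j - y1 * (int k ^ j - 1)
            = x * i * int k ^ j - y2 * (int k ^ j - 1)] (mod int m)"
    using assms by (intro cong_diff cong_mult cong_refl)
  then have "\<And>i j. (x * i * int k ^ j - y1 * (int k ^ j - 1)) mod int m
            = (x * i * int k ^ j - y2 * (int k ^ j - 1)) mod int m"
    by (simp add: cong_def)
  then show ?thesis unfolding mu_def by simp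
qed

lemma CC_unit:
  assumes "m > 0" "coprime y (int m)"
  shows "CC m n k x y = CC m n k x 1"
proof
  show "CC m n k x y \<subseteq> CC m n k x 1"
  proof
    fix f assume "f \<in> CC m n k x y"
    then obtain z where z: "z \<in> Zm m" "f = mu m n k x ((y * z) mod int m)"
      unfolding CC_def by blast
    have "(y * z) mod int m \<in> Zm m" using assms(1) by (simp add: Zm_def)
    moreover have "(1 * ((y * z) mod int m)) mod int m = (y * z) mod int m" by simp
    ultimately have "f = mu m n k x ((1 * ((y * z) mod int m)) mod int m)" using z(2) by simp
    then show "f \<in> CC m n k x 1" unfolding CC_def using \<open>(y * z) mod int m \<in> Zm m\<close> by blast
  qed
next
  show "CC m n k x 1 \<subseteq> CC m n k x y"
  proof
    fix f assume "f \<in> CC m n k x 1"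
    then obtain z where z: "z \<in> Zm m" "f = mu m n k x ((1 * z) mod int m)"
      unfolding CC_def by blast
    obtain y' where y': "[y * y' = 1] (mod int m)"
      using cong_solve_coprime_int[OF assms(2)] by blast
    define w where "w = (y' * z) mod int m"
    have w: "w \<in> Zm m" using assms(1) by (simp add: Zm_def w_def)
    have "[y * w = y * (y' * z)] (mod int m)" unfolding w_def
      by (simp add: cong_def mod_mult_right_eq)
    also have "y * (y' * z) = (y * y') * z" by simp
    also have "[(y * y') * z = 1 * z] (mod int m)" using y' by (intro cong_mult cong_refl)
    finally have "[(y * w) mod int m = (1 * z) mod int m] (mod int m)"
      by (simp add: cong_def)
    then have "mu m n k x ((1 * z) mod int m) = mu m n k x ((y * w) mod int m)"
      by (intro mu_cong) (simp add: cong_def)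
    then have "f = mu m n k x ((y * w) mod int m)" using z(2) by simp
    then show "f \<in> CC m n k x y" unfolding CC_def using w by blast
  qed
qed

lemma n_gt1:
  fixes m n k :: nat
  assumes "m > 1" "k > 0" "gcd m (k - 1) = 1" "n = ord m k" "n > 0"
  shows "n > 1"
proof (rule ccontr)
  assume "\<not> n > 1"
  then have "ord m k = Suc 0" using assms by linarith
  then have "[k = 1] (mod m)" using ord_eq_Suc_0_iff by blast
  then have "m dvd k - 1" using cong_to_1_nat by blast
  then have "m dvd gcd m (k - 1)" by (intro gcd_greatest) auto
  then have "m dvd 1" using assms(3) by simp
  then show False using assms(1) by simp
qed

lemma CC_unit_conv:
  assumes "m > 1" "k > 0" "gcd m (k - 1) = 1" "n > 1"
    and eq: "CC m n k x y = CC m n k x 1"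
  shows "coprime y (int m)"
proof -
  have "1 mod int m \<in> Zm m" using assms(1) by (simp add: Zm_def)
  then have "mu m n k x ((1 * (1 mod int m)) mod int m) \<in> CC m n k x 1"
    unfolding CC_def by blast
  then have "mu m n k x 1 \<in> CC m n k x y" using eq assms(1) by simp
  then obtain z where z: "z \<in> Zm m" "mu m n k x 1 = mu m n k x ((y * z) mod int m)"
    unfolding CC_def by blast
  have g: "(0, 1) \<in> Gcar m n" using assms by (simp add: Gcar_def Zm_def)
  have "mu m n k x 1 (0,1) = mu m n k x ((y * z) mod int m) (0,1)" using z by simp
  then have "(- (int k - 1)) mod int m = (- ((y * z) mod int m * (int k - 1))) mod int m"
    using g unfolding mu_def by simp
  then have "[(- (int k - 1)) = - ((y * z) mod int m * (int k - 1))] (mod int m)"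
    by (simp add: cong_def)
  then have A: "[(int k - 1) = ((y * z) mod int m * (int k - 1))] (mod int m)"
    by (simp only: cong_minus_minus_iff)
  have B: "[(y * z) mod int m * (int k - 1) = (y * z) * (int k - 1)] (mod int m)"
    by (intro cong_mult cong_refl) (simp add: cong_def)
  have "[(int k - 1) = (y * z) * (int k - 1)] (mod int m)"
    using cong_trans[OF A B] .
  then have C: "[(int k - 1) * 1 = (int k - 1) * (y * z)] (mod int m)"
    by (simp add: mult.commute)
  have "coprime m (k - 1)" using assms(3) coprime_iff_gcd_eq_1 by blast
  then have "coprime (k - 1) m" using coprime_commute by blast
  then have "coprime (int (k - 1)) (int m)" by simp
  then have cop: "coprime (int k - 1) (int m)" using assms(2) by (simp add: of_nat_diff)
  have "[1 = y * z] (mod int m)"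
    by (subst cong_mult_lcancel[OF cop, symmetric]) (rule C)
  then have "coprime (y * z) (int m)" using cong_imp_coprime[of 1 "y * z" "int m"] by simp
  then show ?thesis by simp
qed

theorem theorem4p10:
  fixes m n k :: nat and S :: "int set" and x :: int
  assumes "m > 0" "n > 0" "k > 0"
    and "gcd m (k - 1) = 1"
    and "n = ord m k"
    and "is_base m S"
    and "x \<in> semigen m S"
  shows "orb_basic m S x \<longleftrightarrow> family_complete m n k S x"
proof -
  have SZ: "S \<subseteq> Zm m" using assms(6) by (simp add: is_base_def)
  have fc: "family_complete m n k S x \<longleftrightarrow> (\<exists>y\<in>Yset m S x. coprime y (int m))"
  proof
    assume "family_complete m n k S x"
    then obtain y where y: "y \<in> Yset m S x" "CC m n k x 1 = CC m n k x y"
      unfolding family_complete_def family_def by blast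
    have "coprime y (int m)"
    proof (cases "m = 1")
      case True then show ?thesis by simp
    next
      case False
      then have m1: "m > 1" using assms(1) by simp
      have n1: "n > 1" using n_gt1[OF m1 assms(3,4,5,2)] .
      show ?thesis using CC_unit_conv[OF m1 assms(3,4) n1 y(2)[symmetric]] .
    qed
    with y show "\<exists>y\<in>Yset m S x. coprime y (int m)" by blast
  next
    assume "\<exists>y\<in>Yset m S x. coprime y (int m)"
    then obtain y where "y \<in> Yset m S x" "coprime y (int m)" by blast
    moreover have "CC m n k x 1 = CC m n k x y" using CC_unit[OF assms(1) \<open>coprime y (int m)\<close>] by simp
    ultimately show "family_complete m n k S x"
      unfolding family_complete_def family_def by blast
  qed
  show ?thesis
  proof
    assume "orb_basic m S x"
    then obtain y s where y: "y \<in> semigen m S" "coprime y (int m)" "s \<in> S"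
        "s = (x * y) mod int m"
      unfolding orb_basic_def orb_def units_part_def by blast
    obtain b where b: "b \<in> semigen m S" "coprime b (int m)" "[y * b = 1] (mod int m)"
      using inv_in_semigen[OF SZ assms(1) y(1,2)] by blast
    have "[s * b = (x * y) * b] (mod int m)" using y(4)
      by (intro cong_mult cong_refl) (simp add: cong_def)
    also have "(x * y) * b = x * (y * b)" by simp
    also have "[x * (y * b) = x * 1] (mod int m)" using b(3) by (intro cong_mult cong_refl)
    finally have xs: "[x = s * b] (mod int m)" by (simp add: cong_sym)
    have bm: "b mod int m = b" using semigen_Zm[OF SZ assms(1) b(1)] by (simp add: Zm_def)
    have one: "1 mod int m \<in> Zm m" using assms(1) by (simp add: Zm_def)
    have "(b * (1 mod int m)) mod int m = (b * 1) mod int m" by (rule mod_mult_right_eq)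
    then have "b = (b * (1 mod int m)) mod int m" using bm by simp
    then have "b \<in> Yset m S x" unfolding Yset_def using b(1) xs y(3) one by blast
    then show "family_complete m n k S x" using fc b(2) by blast
  next
    assume "family_complete m n k S x"
    then obtain y where y: "y \<in> Yset m S x" "coprime y (int m)" using fc by blast
    then obtain s' z s where sz: "y = (s' * z) mod int m" "s' \<in> semigen m S" "z \<in> Zm m"
        "s \<in> S" "[x = s * s'] (mod int m)"
      unfolding Yset_def by blast
    have "[(s' * z) mod int m = s' * z] (mod int m)" by (simp add: cong_def)
    then have "coprime (s' * z) (int m)" using y(2) sz(1) cong_imp_coprime by blast
    then have s'c: "coprime s' (int m)" by simp
    obtain b where b: "b \<in> semigen m S" "coprime b (int m)" "[s' * b = 1] (mod int m)"
      using inv_in_semigen[OF SZ assms(1) sz(2) s'c] by blast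
    have "[x * b = (s * s') * b] (mod int m)" using sz(5) by (intro cong_mult cong_refl)
    also have "(s * s') * b = s * (s' * b)" by simp
    also have "[s * (s' * b) = s * 1] (mod int m)" using b(3) by (intro cong_mult cong_refl)
    finally have "(x * b) mod int m = s mod int m" by (simp add: cong_def)
    also have "s mod int m = s" using SZ sz(4) by (auto simp: Zm_def)
    finally have "(x * b) mod int m = s" .
    then have "s \<in> orb m (semigen m S) x" unfolding orb_def units_part_def using b(1,2) by blast
    then show "orb_basic m S x" unfolding orb_basic_def using sz(4) by blast
  qed
qed

end
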